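(* Let $X$ be a nonempty compact subset of $\mathbb{R}^n$, $\varphi:X\to\mathbb{R}$ upper semicontinuous, and $\psi:X\to\mathbb{R}$ Lipschitz continuous with constant $L_\psi$ with respect to a norm $\|\cdot\|$. For $\varepsilon\geq0$ let $F_\varepsilon=\{x\in X:\varphi(x)\geq\sup_{x'\in X}\varphi(x')-\varepsilon\}$ and $g(\varepsilon)=\sup_{x\in F_\varepsilon}d(x,F_0)$, where $d(x,F_0)=\inf_{y\in F_0}\|y-x\|$. Let $M=\sup_X\psi-\inf_X\psi$. Then for every $\delta\geq0$, \[ \Big|\sup_{x\in X}\big(\varphi(x)+\delta\psi(x)\big)-\Big[\sup_{x\in X}\varphi(x)+\delta\sup_{x\in\operatorname{arg\,max}\varphi}\psi(x)\Big]\Big|\leq L_\psi\,\delta\, g(\delta M). \]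
   Context: $\operatorname{arg\,max}\varphi=\{x\in X:\varphi(x)=\sup_X\varphi\}$. *)

theory Defs
  imports "HOL-Analysis.Analysis"
begin

definition is_norm :: "('a::real_vector \<Rightarrow> real) \<Rightarrow> bool" where
  "is_norm N \<longleftrightarrow> (\<forall>x. 0 \<le> N x) \<and> (\<forall>x. N x = 0 \<longleftrightarrow> x = 0)
     \<and> (\<forall>c x. N (c *\<^sub>R x) = \<bar>c\<bar> * N x) \<and> (\<forall>x y. N (x + y) \<le> N x + N y)"

definition upper_semicontinuous_on :: "'a::topological_space set \<Rightarrow> ('a \<Rightarrow> real) \<Rightarrow> bool" where
  "upper_semicontinuous_on X f \<longleftrightarrow> (\<forall>a. openin (top_of_set X) {x \<in> X. f x < a})"

definition lipschitz_wrt :: "('a::real_vector \<Rightarrow> real) \<Rightarrow> real \<Rightarrow> 'a set \<Rightarrow> ('a \<Rightarrow> real) \<Rightarrow> bool" where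
  "lipschitz_wrt N L X f \<longleftrightarrow> 0 \<le> L \<and> (\<forall>x\<in>X. \<forall>y\<in>X. \<bar>f x - f y\<bar> \<le> L * N (x - y))"

definition argmax_set :: "'a set \<Rightarrow> ('a \<Rightarrow> real) \<Rightarrow> 'a set" where
  "argmax_set X \<phi> = {x \<in> X. \<phi> x = Sup (\<phi> ` X)}"

definition near_opt :: "'a set \<Rightarrow> ('a \<Rightarrow> real) \<Rightarrow> real \<Rightarrow> 'a set" where
  "near_opt X \<phi> \<epsilon> = {x \<in> X. \<phi> x \<ge> Sup (\<phi> ` X) - \<epsilon>}"

definition normdist :: "('a::real_vector \<Rightarrow> real) \<Rightarrow> 'a \<Rightarrow> 'a set \<Rightarrow> real" where
  "normdist N x F = Inf ((\<lambda>y. N (y - x)) ` F)"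

definition gfun :: "('a::real_vector \<Rightarrow> real) \<Rightarrow> 'a set \<Rightarrow> ('a \<Rightarrow> real) \<Rightarrow> real \<Rightarrow> real" where
  "gfun N X \<phi> \<epsilon> = Sup ((\<lambda>x. normdist N x (near_opt X \<phi> 0)) ` near_opt X \<phi> \<epsilon>)"

end

theory Submission imports Defs begin

lemma norm_sum_le:
  assumes "is_norm N" "finite S"
  shows "N (sum f S) \<le> (\<Sum>i\<in>S. N (f i))"
  using assms(2)
proof (induction S rule: finite_induct)
  case empty
  have "N 0 = 0" using assms(1) unfolding is_norm_def by auto
  then show ?case by simp
next
  case (insert a S)
  have "N (f a + sum f S) \<le> N (f a) + N (sum f S)" using assms(1) unfolding is_norm_def by blast
  then show ?case using insert by simp
qed

lemma norm_le_C:
  fixes x :: "'a::euclidean_space"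
  assumes "is_norm N"
  shows "N x \<le> norm x * (\<Sum>b\<in>Basis. N b)"
proof -
  have "N x = N (\<Sum>b\<in>Basis. inner x b *\<^sub>R b)" by (simp add: euclidean_representation)
  also have "\<dots> \<le> (\<Sum>b\<in>Basis. N (inner x b *\<^sub>R b))" by (rule norm_sum_le[OF assms]) simp
  also have "\<dots> = (\<Sum>b\<in>Basis. \<bar>inner x b\<bar> * N b)" using assms unfolding is_norm_def by simp
  also have "\<dots> \<le> (\<Sum>b\<in>Basis. norm x * N b)"
  proof (rule sum_mono)
    fix b :: 'a assume "b \<in> Basis"
    then have "\<bar>inner x b\<bar> \<le> norm x" by (simp add: Basis_le_norm)
    moreover have "N b \<ge> 0" using assms unfolding is_norm_def by auto
    ultimately show "\<bar>inner x b\<bar> * N b \<le> norm x * N b" by (simp add: mult_right_mono)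
  qed
  also have "\<dots> = norm x * (\<Sum>b\<in>Basis. N b)" by (simp add: sum_distrib_left)
  finally show ?thesis .
qed

lemma norm_neg:
  assumes "is_norm N" shows "N (y - x) = N (x - y)"
proof -
  have "N ((-1) *\<^sub>R (x - y)) = \<bar>-1\<bar> * N (x - y)" using assms unfolding is_norm_def by blast
  then show ?thesis by simp
qed

lemma usc_max:
  fixes X :: "'a::metric_space set"
  assumes "compact X" "X \<noteq> {}" "upper_semicontinuous_on X f"
  shows "\<exists>x\<in>X. \<forall>y\<in>X. f y \<le> f x"
proof -
  define C where "C a = {x\<in>X. f x \<ge> a}" for a
  have cl: "closed (C a)" for a
  proof -
    have "closedin (top_of_set X) (X - {x\<in>X. f x < a})"
      using assms(3) unfolding upper_semicontinuous_on_def by auto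
    moreover have "X - {x\<in>X. f x < a} = C a" unfolding C_def by auto
    ultimately show ?thesis using closedin_closed_trans compact_imp_closed assms(1) by metis
  qed
  have "X \<inter> \<Inter>(C ` f ` X) \<noteq> {}"
  proof (rule compact_imp_fip[OF assms(1)])
    show "\<And>T. T \<in> C ` f ` X \<Longrightarrow> closed T" using cl by auto
  next
    fix F' assume F': "finite F'" "F' \<subseteq> C ` f ` X"
    have "F' \<subseteq> (\<lambda>x. C (f x)) ` X" using F'(2) by auto
    then obtain K where K: "K \<subseteq> X" "finite K" "F' = (\<lambda>x. C (f x)) ` K"
      using finite_subset_image[OF F'(1)] by blast
    show "X \<inter> \<Inter> F' \<noteq> {}"
    proof (cases "K = {}")
      case True then show ?thesis using K assms(2) by auto
    next
      case False
      then obtain k where k: "k \<in> K" "\<forall>z\<in>K. f z \<le> f k"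
      proof -
        have "Max (f ` K) \<in> f ` K" using K(2) False by simp
        then obtain k where "k \<in> K" "f k = Max (f ` K)" by auto
        moreover have "\<forall>z\<in>K. f z \<le> Max (f ` K)" using K(2) by simp
        ultimately show ?thesis using that by auto
      qed
      then have "k \<in> X \<inter> \<Inter> F'" using K unfolding C_def by auto
      then show ?thesis by blast
    qed
  qed
  then obtain x where "x \<in> X" "\<forall>a\<in>f ` X. x \<in> C a" by auto
  then show ?thesis unfolding C_def by auto
qed

theorem lemma5p12:
  fixes X :: "(real ^ 'n) set" and \<phi> \<psi> :: "real ^ 'n \<Rightarrow> real"
    and N :: "real ^ 'n \<Rightarrow> real" and L \<delta> :: real
  assumes "is_norm N"
    and "X \<noteq> {}" and "compact X"
    and "upper_semicontinuous_on X \<phi>"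
    and "lipschitz_wrt N L X \<psi>"
    and "\<delta> \<ge> 0"
  shows "\<bar>Sup ((\<lambda>x. \<phi> x + \<delta> * \<psi> x) ` X)
           - (Sup (\<phi> ` X) + \<delta> * Sup (\<psi> ` argmax_set X \<phi>))\<bar>
         \<le> L * \<delta> * gfun N X \<phi> (\<delta> * (Sup (\<psi> ` X) - Inf (\<psi> ` X)))"
proof -
  note nN = assms(1)
  have L0: "L \<ge> 0" and lip: "\<And>x y. x \<in> X \<Longrightarrow> y \<in> X \<Longrightarrow> \<bar>\<psi> x - \<psi> y\<bar> \<le> L * N (x - y)"
    using assms(5) unfolding lipschitz_wrt_def by auto
  have Nnn: "\<And>v. N v \<ge> 0" using nN unfolding is_norm_def by auto
  define K where "K = (\<Sum>b\<in>Basis. N (b :: real ^ 'n))"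
  have NK: "\<And>v. N v \<le> norm v * K" unfolding K_def by (rule norm_le_C[OF nN])
  have K0: "K \<ge> 0" unfolding K_def using Nnn by (simp add: sum_nonneg)
  obtain B where B: "\<And>x. x \<in> X \<Longrightarrow> norm x \<le> B"
    using compact_imp_bounded[OF assms(3)] unfolding bounded_iff by blast
  have NX: "N (x - y) \<le> 2 * B * K" if "x \<in> X" "y \<in> X" for x y
  proof -
    have "norm (x - y) \<le> 2 * B" using B[OF that(1)] B[OF that(2)] norm_triangle_ineq4[of x y] by linarith
    then have "norm (x - y) * K \<le> 2 * B * K" using K0 by (simp add: mult_right_mono)
    then show ?thesis using NK[of "x - y"] by linarith
  qed
  obtain x0 where x0: "x0 \<in> X" "\<And>y. y \<in> X \<Longrightarrow> \<phi> y \<le> \<phi> x0"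
    using usc_max[OF assms(3,2,4)] by blast
  define m where "m = Sup (\<phi> ` X)"
  have m: "m = \<phi> x0" unfolding m_def using x0 by (intro cSup_eq_maximum) auto
  have phim: "\<And>y. y \<in> X \<Longrightarrow> \<phi> y \<le> m" using x0 m by auto
  define F0 where "F0 = argmax_set X \<phi>"
  have F0: "near_opt X \<phi> 0 = F0" unfolding F0_def near_opt_def argmax_set_def
    using phim m_def by force
  have F0X: "F0 \<subseteq> X" unfolding F0_def argmax_set_def by auto
  have x0F: "x0 \<in> F0" unfolding F0_def argmax_set_def using x0 m m_def by auto
  have phiF: "\<And>y. y \<in> F0 \<Longrightarrow> \<phi> y = m" unfolding F0_def argmax_set_def m_def by auto
  have psib: "\<bar>\<psi> x\<bar> \<le> \<bar>\<psi> x0\<bar> + L * (2 * B * K)" if "x \<in> X" for x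
  proof -
    have "\<bar>\<psi> x - \<psi> x0\<bar> \<le> L * N (x - x0)" using lip that x0 by auto
    also have "\<dots> \<le> L * (2 * B * K)" using NX[OF that x0(1)] L0 by (simp add: mult_left_mono)
    finally show ?thesis by linarith
  qed
  define P where "P = \<bar>\<psi> x0\<bar> + L * (2 * B * K)"
  have bddA: "bdd_above (\<psi> ` S)" if "S \<subseteq> X" for S
  proof -
    have "\<psi> x \<le> P" if "x \<in> S" for x using psib[of x] that \<open>S \<subseteq> X\<close> P_def by force
    then show ?thesis unfolding bdd_above_def by blast
  qed
  have bddB: "bdd_below (\<psi> ` X)"
  proof -
    have "- P \<le> \<psi> x" if "x \<in> X" for x using psib[OF that] P_def by linarith
    then show ?thesis unfolding bdd_below_def by blast
  qed
  define A where "A = Sup (\<psi> ` F0)"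
  have psiA: "\<And>y. y \<in> F0 \<Longrightarrow> \<psi> y \<le> A" unfolding A_def using bddA[OF F0X] by (simp add: cSup_upper)
  define M where "M = Sup (\<psi> ` X) - Inf (\<psi> ` X)"
  have supX: "\<And>y. y \<in> X \<Longrightarrow> \<psi> y \<le> Sup (\<psi> ` X)" using bddA by (simp add: cSup_upper)
  have infX: "\<And>y. y \<in> X \<Longrightarrow> Inf (\<psi> ` X) \<le> \<psi> y" using bddB by (simp add: cInf_lower)
  define S where "S = Sup ((\<lambda>x. \<phi> x + \<delta> * \<psi> x) ` X)"
  have bddS: "bdd_above ((\<lambda>x. \<phi> x + \<delta> * \<psi> x) ` X)"
  proof -
    have "\<phi> x + \<delta> * \<psi> x \<le> m + \<delta> * P" if "x \<in> X" for x
    proof -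
      have "\<psi> x \<le> P" using psib[OF that] P_def by linarith
      then have "\<delta> * \<psi> x \<le> \<delta> * P" using assms(6) by (rule mult_left_mono)
      then show ?thesis using phim[OF that] by linarith
    qed
    then show ?thesis unfolding bdd_above_def by auto
  qed
  define d where "d x = normdist N x F0" for x
  have d0: "d x \<ge> 0" for x unfolding d_def normdist_def using x0F Nnn
    by (intro cInf_greatest) auto
  have dle: "d x \<le> N (y - x)" if "y \<in> F0" for x y unfolding d_def normdist_def
    using that Nnn by (intro cInf_lower) (auto simp: bdd_below_def)
  have psid: "\<psi> x - A \<le> L * d x" if "x \<in> X" for x
  proof (cases "L = 0")
    case True
    then have "\<psi> x \<le> \<psi> x0" using lip[OF that x0(1)] by simp
    then show ?thesis using psiA[OF x0F] True by simp
  next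
    case False
    then have Lp: "L > 0" using L0 by simp
    have "(\<psi> x - A) / L \<le> d x" unfolding d_def normdist_def
    proof (rule cInf_greatest)
      show "(\<lambda>y. N (y - x)) ` F0 \<noteq> {}" using x0F by auto
    next
      fix r assume "r \<in> (\<lambda>y. N (y - x)) ` F0"
      then obtain y where y: "y \<in> F0" "r = N (y - x)" by auto
      have "\<psi> x - \<psi> y \<le> L * N (x - y)" using lip[OF that] y F0X by force
      then have "\<psi> x - A \<le> L * r" using psiA[OF y(1)] y norm_neg[OF nN, of x y] by simp
      then show "(\<psi> x - A) / L \<le> r" using Lp by (simp add: divide_le_eq mult.commute)
    qed
    then show ?thesis using Lp by (simp add: divide_le_eq mult.commute)
  qed
  define g where "g = gfun N X \<phi> (\<delta> * M)"
  have FdX: "near_opt X \<phi> (\<delta> * M) \<subseteq> X" unfolding near_opt_def by auto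
  have bddg: "bdd_above (d ` near_opt X \<phi> (\<delta> * M))"
  proof -
    have "d x \<le> 2 * B * K" if "x \<in> X" for x
      using dle[OF x0F, of x] NX[OF x0(1) that] by linarith
    then show ?thesis using FdX unfolding bdd_above_def by blast
  qed
  have g_def': "g = Sup (d ` near_opt X \<phi> (\<delta> * M))"
    unfolding g_def gfun_def d_def F0 ..
  have x0Fd: "x0 \<in> near_opt X \<phi> (\<delta> * M)"
  proof -
    have "M \<ge> 0" unfolding M_def using supX[OF x0(1)] infX[OF x0(1)] by simp
    then have "\<delta> * M \<ge> 0" using assms(6) by simp
    then show ?thesis unfolding near_opt_def using x0 m m_def by auto
  qed
  have gd: "d x \<le> g" if "x \<in> near_opt X \<phi> (\<delta> * M)" for x
    unfolding g_def' using bddg that by (simp add: cSup_upper)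
  have g0: "g \<ge> 0" using gd[OF x0Fd] d0[of x0] by linarith
  have low: "m + \<delta> * A \<le> S"
  proof (cases "\<delta> = 0")
    case True
    have "\<phi> x0 + \<delta> * \<psi> x0 \<le> S" unfolding S_def using bddS x0 by (simp add: cSup_upper)
    then show ?thesis using True m by simp
  next
    case False
    then have dp: "\<delta> > 0" using assms(6) by simp
    have "A \<le> (S - m) / \<delta>" unfolding A_def
    proof (rule cSup_least)
      show "\<psi> ` F0 \<noteq> {}" using x0F by auto
    next
      fix r assume "r \<in> \<psi> ` F0"
      then obtain y where y: "y \<in> F0" "r = \<psi> y" by auto
      have "\<phi> y + \<delta> * \<psi> y \<le> S" unfolding S_def using bddS y F0X by (auto intro: cSup_upper)
      then have "\<delta> * r \<le> S - m" using phiF[OF y(1)] y by simp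
      then show "r \<le> (S - m) / \<delta>" using dp by (simp add: le_divide_eq mult.commute)
    qed
    then show ?thesis using dp by (simp add: le_divide_eq mult.commute)
  qed
  have up: "S \<le> m + \<delta> * A + L * \<delta> * g"
    unfolding S_def
  proof (rule cSup_least)
    show "(\<lambda>x. \<phi> x + \<delta> * \<psi> x) ` X \<noteq> {}" using assms(2) by simp
  next
    fix r assume "r \<in> (\<lambda>x. \<phi> x + \<delta> * \<psi> x) ` X"
    then obtain x where x: "x \<in> X" "r = \<phi> x + \<delta> * \<psi> x" by auto
    have Lg: "L * \<delta> * g \<ge> 0" using L0 assms(6) g0 by simp
    show "r \<le> m + \<delta> * A + L * \<delta> * g"
    proof (cases "x \<in> near_opt X \<phi> (\<delta> * M)")
      case True
      have "L * d x \<le> L * g" using gd[OF True] L0 by (rule mult_left_mono)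
      then have "\<psi> x \<le> A + L * g" using psid[OF x(1)] by linarith
      then have "\<delta> * \<psi> x \<le> \<delta> * (A + L * g)" using assms(6) by (rule mult_left_mono)
      then have "\<delta> * \<psi> x \<le> \<delta> * A + L * \<delta> * g" by (simp add: algebra_simps)
      then show ?thesis using x phim[OF x(1)] by linarith
    next
      case False
      then have "\<phi> x < m - \<delta> * M" using x unfolding near_opt_def m_def by auto
      moreover have "\<delta> * \<psi> x - \<delta> * M \<le> \<delta> * A"
      proof -
        have "\<psi> x - M \<le> A" using supX[OF x(1)] infX[OF x0(1)] psiA[OF x0F] M_def by linarith
        then have "\<delta> * (\<psi> x - M) \<le> \<delta> * A" using assms(6) by (simp add: mult_left_mono)
        then show ?thesis by (simp add: right_diff_distrib)
      qed
      ultimately show ?thesis using x Lg by linarith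
    qed
  qed
  have "\<bar>S - (m + \<delta> * A)\<bar> \<le> L * \<delta> * g" using low up by linarith
  then show ?thesis unfolding S_def m_def A_def F0_def g_def M_def .
qed

end
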